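(* Let $v\equiv 1$ or $7\pmod{24}$ with $v\ge 7$, and let $n=\frac{v-1}{6}$. For every integer $i$ with $0\le i\le n$ there exists a cyclic three-fold triple system CTS$(v,3)$ with fine structure $(c_1,c_2,c_3)$ satisfying $c_2=n-i$ and $c_3=i$ (and hence $c_1=3n-2c_2-3c_3$).
   Context: A cyclic $\lambda$-fold triple system CTS$(v,\lambda)$ is a multiset $\mathcal B$ of 3-element subsets (blocks) of $\mathbb Z_v$ such that every 2-element subset of $\mathbb Z_v$ is contained in exactly $\lambda$ blocks (counted with multiplicity), and $\mathcal B$ is invariant under the translation $x\mapsto x+1$. Thus $\mathcal B$ is a union of translation orbits of 3-subsets with multiplicities; a base block is an orbit representative. The fine structure is $(c_1,\ldots,c_\lambda)$, where $c_i$ is the number of distinct base blocks (orbits) occurring with multiplicity exactly $i$. For $\lambda=3$ the paper writes the fine structure as the pair $(t,s)=(c_2,c_3)$. *)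

theory Defs
  imports Main "HOL-Library.Multiset"
begin

text \<open>Z_v is represented by {0..<v} (v :: nat) with arithmetic mod v.\<close>

definition shift :: "nat \<Rightarrow> nat \<Rightarrow> nat set \<Rightarrow> nat set" where
  "shift v k B = (\<lambda>x. (x + k) mod v) ` B"

definition is_CTS :: "nat \<Rightarrow> nat \<Rightarrow> nat set multiset \<Rightarrow> bool" where
  "is_CTS v lam M \<longleftrightarrow>
     (\<forall>B \<in># M. B \<subseteq> {..<v} \<and> card B = 3) \<and>
     (\<forall>x<v. \<forall>y<v. x \<noteq> y \<longrightarrow> size (filter_mset (\<lambda>B. {x, y} \<subseteq> B) M) = lam) \<and>
     image_mset (shift v 1) M = M"

definition orbit :: "nat \<Rightarrow> nat set \<Rightarrow> nat set set" where
  "orbit v B = {shift v k B | k. k < v}"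

definition fine_c :: "nat \<Rightarrow> nat set multiset \<Rightarrow> nat \<Rightarrow> nat" where
  "fine_c v M i = card {orbit v B | B. B \<in># M \<and> count M B = i}"

end

theory Submission
  imports Defs
begin


definition blk :: "nat \<Rightarrow> nat \<Rightarrow> nat set" where "blk p q = {0, p, p+q}"

lemma mod2v: "(x::nat) < 2*v \<Longrightarrow> x mod v = (if x < v then x else x - v)"
  by (simp add: le_mod_geq)

lemma shift_shift: "shift v a (shift v b B) = shift v (a+b) B"
  unfolding shift_def image_image
proof (rule image_cong)
  fix x
  have "(a + (x + b) mod v) mod v = (a + (x + b)) mod v" by (simp add: mod_add_right_eq)
  then show "((x + b) mod v + a) mod v = (x + (a + b)) mod v" by (simp add: ac_simps)
qed simp

lemma shift_mod: "shift v (m mod v) B = shift v m B"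
  unfolding shift_def by (rule image_cong) (simp_all add: mod_add_right_eq)

lemma shift_0: "B \<subseteq> {..<v} \<Longrightarrow> shift v 0 B = B"
  unfolding shift_def by (auto simp: image_iff) (metis lessThan_iff mod_less subsetD)+

lemma mem_shift:
  assumes "x < v" "k < v" "B \<subseteq> {..<v}"
  shows "x \<in> shift v k B \<longleftrightarrow> (x + v - k) mod v \<in> B"
proof
  assume "x \<in> shift v k B"
  then obtain t where t: "t \<in> B" "x = (t + k) mod v" unfolding shift_def by auto
  have tv: "t < v" using t assms by auto
  have "(x + v - k) mod v = t"
  proof (cases "t + k < v")
    case True
    then have "x = t + k" using t by simp
    then show ?thesis using tv by (simp add: mod2v)
  next
    case False
    then have "x = t + k - v" using t tv assms mod2v[of "t+k" v] by simp
    then have "x + v - k = t" using False by simp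
    then show ?thesis using tv by simp
  qed
  then show "(x + v - k) mod v \<in> B" using t by simp
next
  assume h: "(x + v - k) mod v \<in> B"
  have "((x + v - k) mod v + k) mod v = x"
  proof (cases "x + v - k < v")
    case True
    then show ?thesis using assms by (simp add: mod2v)
  next
    case False
    then have "(x + v - k) mod v = x - k" using assms mod2v[of "x+v-k" v] by simp
    then show ?thesis using False assms by simp
  qed
  then show "x \<in> shift v k B" using h unfolding shift_def by (metis image_eqI)
qed

lemma blk_sub: "p + q < v \<Longrightarrow> blk p q \<subseteq> {..<v}"
  unfolding blk_def by auto

lemma invol:
  fixes x v k :: nat
  assumes "x < v" "k < v"
  shows "(x + v - (x + v - k) mod v) mod v = k" "(x + v - k) mod v < v"
proof -
  have "0 < v" using assms by simp
  then show "(x + v - k) mod v < v" by simp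
  show "(x + v - (x + v - k) mod v) mod v = k"
  proof (cases "x < k")
    case True
    then have "(x + v - k) mod v = x + v - k" using assms by simp
    then show ?thesis using True assms by simp
  next
    case False
    then have "(x + v - k) mod v = x - k" using assms mod2v[of "x+v-k" v] by simp
    then show ?thesis using False assms by simp
  qed
qed

lemma card_reflect:
  fixes x v :: nat
  assumes "x < v"
  shows "card {k. k < v \<and> Q ((x + v - k) mod v)} = card {t. t < v \<and> Q t}"
proof -
  let ?f = "\<lambda>k. (x + v - k) mod v"
  have "{k. k < v \<and> Q (?f k)} = ?f ` {t. t < v \<and> Q t}"
  proof (intro equalityI subsetI)
    fix k assume "k \<in> {k. k < v \<and> Q (?f k)}"
    then have k: "k < v" "Q (?f k)" by auto
    then have "k = ?f (?f k)" using invol(1)[OF assms k(1)] by simp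
    then show "k \<in> ?f ` {t. t < v \<and> Q t}" using k invol(2)[OF assms k(1)] by blast
  next
    fix k assume "k \<in> ?f ` {t. t < v \<and> Q t}"
    then obtain t where t: "t < v" "Q t" "k = ?f t" by auto
    then show "k \<in> {k. k < v \<and> Q (?f k)}" using invol[OF assms t(1)] by auto
  qed
  moreover have "inj_on ?f {t. t < v \<and> Q t}"
    by (rule inj_on_inverseI[where g = ?f]) (use invol assms in auto)
  ultimately show ?thesis by (simp add: card_image)
qed

lemma diff_shift:
  fixes x y v k :: nat
  assumes "x < v" "y < v" "k < v"
  shows "(y + v - k) mod v = ((x + v - k) mod v + (y + v - x) mod v) mod v"
proof -
  have "((x + v - k) mod v + (y + v - x) mod v) mod v = ((x + v - k) + (y + v - x)) mod v"
    using mod_add_eq[of "x+v-k" v "y+v-x"] by simp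
  also have "(x + v - k) + (y + v - x) = (y + v - k) + v" using assms by simp
  finally show ?thesis by simp
qed


lemma cardA_aux:
  fixes v n p q d :: nat
  assumes v: "v = 6*n+1" and p: "1 \<le> p" "1 \<le> q" "p \<noteq> q" "p+q \<le> 3*n"
    and d: "1 \<le> d" "d < v"
  shows "card {t \<in> blk p q. (t + d) mod v \<in> blk p q} =
     (if d \<in> {p, q, p+q, v-p, v-q, v-p-q} then 1 else 0)"
proof -
  let ?P = "\<lambda>t. (t + d) mod v \<in> blk p q"
  have c: "card {t \<in> blk p q. ?P t} = (\<Sum>t\<in>blk p q. if ?P t then 1 else 0)"
  proof -
    have "{t \<in> blk p q. ?P t} = blk p q \<inter> {t. ?P t}" by blast
    then show ?thesis by (simp add: sum.If_cases blk_def)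
  qed
  have s: "(\<Sum>t\<in>blk p q. (if ?P t then 1 else 0::nat)) =
     (if ?P 0 then 1 else 0) + (if ?P p then 1 else 0) + (if ?P (p+q) then 1 else 0)"
    using p by (simp add: blk_def)
  have P0: "?P 0 \<longleftrightarrow> d = p \<or> d = p + q" using d by (simp add: blk_def)
  have P1: "?P p \<longleftrightarrow> d = q \<or> d = v - p"
    by (cases "p+d<v") (use v p d in \<open>auto simp: mod2v blk_def\<close>)
  have P2: "?P (p+q) \<longleftrightarrow> d = v - q \<or> d = v - p - q"
    by (cases "p+q+d<v") (use v p d in \<open>auto simp: mod2v blk_def\<close>)
  have f: "(if d = p \<or> d = p + q then 1 else 0) + (if d = q \<or> d = v - p then 1 else 0) + (if d = v - q \<or> d = v - p - q then 1 else 0) =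
     (if d \<in> {p, q, p+q, v-p, v-q, v-p-q} then 1 else (0::nat))"
  proof (cases "d \<in> {p, q, p+q, v-p, v-q, v-p-q}")
    case True
    then show ?thesis using v p d by (elim insertE) auto
  next
    case False
    then show ?thesis by auto
  qed
  show ?thesis unfolding c s P0 P1 P2 f ..
qed

lemma cardA:
  fixes v n p q x y :: nat
  assumes v: "v = 6*n+1" and p: "1 \<le> p" "1 \<le> q" "p \<noteq> q" "p+q \<le> 3*n"
    and xy: "x < v" "y < v" "x \<noteq> y"
  shows "card {k. k < v \<and> {x, y} \<subseteq> shift v k (blk p q)} =
     (if (y + v - x) mod v \<in> {p, q, p+q, v-p, v-q, v-p-q} then 1 else 0)"
proof -
  define B where "B = blk p q"
  define dd where "dd = (y + v - x) mod v"
  have Bs: "B \<subseteq> {..<v}" unfolding B_def using v p by (intro blk_sub) simp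
  have "{k. k < v \<and> {x, y} \<subseteq> shift v k B} =
        {k. k < v \<and> ((x + v - k) mod v \<in> B \<and> ((x + v - k) mod v + dd) mod v \<in> B)}"
    using mem_shift[OF xy(1) _ Bs] mem_shift[OF xy(2) _ Bs] diff_shift[OF xy(1,2)]
    unfolding dd_def by auto
  then have "card {k. k < v \<and> {x, y} \<subseteq> shift v k B} = card {t. t < v \<and> (t \<in> B \<and> (t + dd) mod v \<in> B)}"
    using card_reflect[OF xy(1), of "\<lambda>t. t \<in> B \<and> (t + dd) mod v \<in> B"] by simp
  also have "{t. t < v \<and> (t \<in> B \<and> (t + dd) mod v \<in> B)} = {t \<in> B. (t + dd) mod v \<in> B}"
    using Bs by auto
  also have "dd \<noteq> 0"
  proof
    assume "dd = 0"
    then show False using xy mod2v[of "y+v-x" v] unfolding dd_def by (auto split: if_splits)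
  qed
  then have "card {t \<in> B. (t + dd) mod v \<in> B} = (if dd \<in> {p, q, p+q, v-p, v-q, v-p-q} then 1 else 0)"
    unfolding B_def using cardA_aux[OF v p, of dd] v unfolding dd_def by simp
  finally show ?thesis unfolding B_def dd_def .
qed

lemma lemB:
  fixes v n p q p' q' k k' :: nat
  assumes v: "v = 6*n+1" and p: "1 \<le> p" "1 \<le> q" "p+q \<le> 3*n"
    and p': "1 \<le> p'" "1 \<le> q'" "p'+q' \<le> 3*n" and k: "k < v" "k' < v"
    and eq: "shift v k (blk p q) = shift v k' (blk p' q')"
  shows "p = p' \<and> q = q' \<and> k = k'"
proof -
  define c where "c = (k + (v - k')) mod v"
  have Bs: "blk p q \<subseteq> {..<v}" "blk p' q' \<subseteq> {..<v}" using v p p' blk_sub[of p q v] blk_sub[of p' q' v] by simp_all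
  have "shift v (v - k') (shift v k (blk p q)) = shift v (v - k') (shift v k' (blk p' q'))"
    using eq by simp
  then have e2: "shift v c (blk p q) = blk p' q'"
    unfolding shift_shift c_def shift_mod using k shift_mod[of v v] shift_0[OF Bs(2)]
    by (simp add: add.commute)
  have cv: "c < v" unfolding c_def using v by simp
  have "c \<in> shift v c (blk p q)" unfolding shift_def blk_def using cv by auto
  then have c3: "c \<le> 3*n" using e2 p' by (auto simp: blk_def)
  have "0 \<in> shift v c (blk p q)" using e2 by (simp add: blk_def)
  then obtain t where t: "t \<in> blk p q" "(t + c) mod v = 0" unfolding shift_def by auto
  have "t \<le> 3*n" using t p by (auto simp: blk_def)
  then have c0: "c = 0" using t(2) c3 v by simp
  then have "blk p q = blk p' q'" using e2 shift_0[OF Bs(1)] by simp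
  then have m: "p \<in> blk p' q'" "p' \<in> blk p q" "p+q \<in> blk p' q'" "p'+q' \<in> blk p q"
    unfolding blk_def by blast+
  have pp: "p = p'" using m(1,2) p p' unfolding blk_def by auto
  have "p + q = p' + q'" using m(3,4) p p' pp unfolding blk_def by auto
  then have "p = p' \<and> q = q'" using pp by simp
  moreover have "k = k'"
  proof -
    have "k + (v-k') < 2*v" using k by simp
    then have "(k + (v - k')) mod v = (if k + (v-k') < v then k + (v-k') else k + (v-k') - v)" by (rule mod2v)
    then show "k = k'" using c0 k unfolding c_def by (auto split: if_splits)
  qed
  ultimately show ?thesis by simp
qed



definition orbM :: "nat \<Rightarrow> nat set \<Rightarrow> nat set multiset" where
  "orbM v B = (\<Sum>k<v. {#shift v k B#})"

definition bigM :: "nat \<Rightarrow> (nat \<times> nat) set \<Rightarrow> (nat \<times> nat \<Rightarrow> nat) \<Rightarrow> nat set multiset" where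
  "bigM v Bs mu = (\<Sum>b\<in>Bs. repeat_mset (mu b) (orbM v (blk (fst b) (snd b))))"

definition good :: "nat \<Rightarrow> nat \<times> nat \<Rightarrow> bool" where
  "good n b \<longleftrightarrow> 1 \<le> fst b \<and> 1 \<le> snd b \<and> fst b \<noteq> snd b \<and> fst b + snd b \<le> 3*n"

lemma filter_repeat: "filter_mset P (repeat_mset m A) = repeat_mset m (filter_mset P A)"
  by (induction m) simp_all

lemma image_repeat: "image_mset f (repeat_mset m A) = repeat_mset m (image_mset f A)"
  by (induction m) simp_all

lemma filter_sum: "filter_mset P (sum f A) = (\<Sum>a\<in>A. filter_mset P (f a))"
  by (induction A rule: infinite_finite_induct) simp_all

lemma image_sum: "image_mset g (sum f A) = (\<Sum>a\<in>A. image_mset g (f a))"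
  by (induction A rule: infinite_finite_induct) simp_all

lemma card_sum_if: "finite A \<Longrightarrow> (\<Sum>k\<in>A. if P k then 1 else 0::nat) = card {k\<in>A. P k}"
proof -
  assume "finite A"
  have "{k\<in>A. P k} = A \<inter> {k. P k}" by blast
  then show ?thesis using \<open>finite A\<close> by (simp add: sum.If_cases)
qed

lemma count_orbM: "count (orbM v B) X = card {k. k < v \<and> shift v k B = X}"
proof -
  have "count (orbM v B) X = (\<Sum>k<v. if shift v k B = X then 1 else 0)"
    unfolding orbM_def count_sum by (intro sum.cong) auto
  also have "\<dots> = card {k\<in>{..<v}. shift v k B = X}" by (rule card_sum_if) simp
  also have "{k\<in>{..<v}. shift v k B = X} = {k. k < v \<and> shift v k B = X}" by auto
  finally show ?thesis .
qed

lemma size_filter_orbM: "size (filter_mset P (orbM v B)) = card {k. k < v \<and> P (shift v k B)}"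
proof -
  have "size (filter_mset P (orbM v B)) = (\<Sum>k<v. if P (shift v k B) then 1 else 0)"
    unfolding orbM_def filter_sum size_multiset_sum by (intro sum.cong) auto
  also have "\<dots> = card {k\<in>{..<v}. P (shift v k B)}" by (rule card_sum_if) simp
  also have "{k\<in>{..<v}. P (shift v k B)} = {k. k < v \<and> P (shift v k B)}" by auto
  finally show ?thesis .
qed

lemma image_orbM:
  assumes "B \<subseteq> {..<v}"
  shows "image_mset (shift v 1) (orbM v B) = orbM v B"
proof -
  have "image_mset (shift v 1) (orbM v B) = (\<Sum>k<v. {#shift v (Suc k) B#})"
    unfolding orbM_def image_sum by (simp add: shift_shift)
  moreover have "shift v v B = shift v 0 B" using shift_mod[of v v B] by simp
  moreover have "(\<Sum>k<Suc v. {#shift v k B#}) = {#shift v 0 B#} + (\<Sum>k<v. {#shift v (Suc k) B#})"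
    by (rule sum.lessThan_Suc_shift)
  moreover have "(\<Sum>k<Suc v. {#shift v k B#}) = (\<Sum>k<v. {#shift v k B#}) + {#shift v v B#}"
    by (rule sum.lessThan_Suc)
  ultimately show ?thesis unfolding orbM_def by (metis add.commute add_right_cancel)
qed

lemma count_bigM:
  assumes v: "v = 6*n+1" and fin: "finite Bs" and g: "\<forall>b\<in>Bs. good n b" and g0: "good n b0" and k0: "k0 < v"
  shows "count (bigM v Bs mu) (shift v k0 (blk (fst b0) (snd b0))) = (if b0 \<in> Bs then mu b0 else 0)"
proof -
  have c: "card {k. k < v \<and> shift v k (blk (fst b) (snd b)) = shift v k0 (blk (fst b0) (snd b0))}
      = (if b = b0 then 1 else 0)" if b: "b \<in> Bs" for b
  proof -
    have "{k. k < v \<and> shift v k (blk (fst b) (snd b)) = shift v k0 (blk (fst b0) (snd b0))}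
        = (if b = b0 then {k0} else {})"
      using lemB[OF v, of "fst b" "snd b" "fst b0" "snd b0"] g b g0 k0 unfolding good_def
      by (auto simp: prod_eq_iff)
    then show ?thesis by simp
  qed
  have "count (bigM v Bs mu) (shift v k0 (blk (fst b0) (snd b0))) = (\<Sum>b\<in>Bs. mu b * (if b = b0 then 1 else 0))"
    unfolding bigM_def count_sum count_repeat_mset count_orbM using c by (intro sum.cong) auto
  also have "\<dots> = (\<Sum>b\<in>Bs. if b = b0 then mu b else 0)" by (intro sum.cong) auto
  also have "\<dots> = (if b0 \<in> Bs then mu b0 else 0)" using fin by (simp add: sum.delta')
  finally show ?thesis .
qed

lemma mem_bigM:
  assumes "X \<in># bigM v Bs mu" and fin: "finite Bs"
  shows "\<exists>b\<in>Bs. \<exists>k<v. mu b > 0 \<and> X = shift v k (blk (fst b) (snd b))"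
proof -
  have "0 < count (bigM v Bs mu) X" using assms by simp
  then have "0 < (\<Sum>b\<in>Bs. mu b * card {k. k < v \<and> shift v k (blk (fst b) (snd b)) = X})"
    unfolding bigM_def count_sum count_repeat_mset count_orbM .
  then have "\<exists>b\<in>Bs. 0 < mu b * card {k. k < v \<and> shift v k (blk (fst b) (snd b)) = X}"
  proof (rule contrapos_pp)
    assume "\<not> (\<exists>b\<in>Bs. 0 < mu b * card {k. k < v \<and> shift v k (blk (fst b) (snd b)) = X})"
    then have "\<forall>b\<in>Bs. mu b * card {k. k < v \<and> shift v k (blk (fst b) (snd b)) = X} = 0"
      by (meson not_gr_zero)
    then have "(\<Sum>b\<in>Bs. mu b * card {k. k < v \<and> shift v k (blk (fst b) (snd b)) = X}) = 0"
      by (rule sum.neutral)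
    then show "\<not> 0 < (\<Sum>b\<in>Bs. mu b * card {k. k < v \<and> shift v k (blk (fst b) (snd b)) = X})"
      by simp
  qed
  then obtain b where b: "b \<in> Bs" "0 < mu b * card {k. k < v \<and> shift v k (blk (fst b) (snd b)) = X}"
    by blast
  then have "{k. k < v \<and> shift v k (blk (fst b) (snd b)) = X} \<noteq> {}"
    by (metis card.empty less_irrefl mult_0_right)
  then obtain k where "k < v" "shift v k (blk (fst b) (snd b)) = X" by blast
  then show ?thesis using b by (metis gr0I mult_not_zero)
qed

lemma image_bigM:
  assumes v: "v = 6*n+1" and g: "\<forall>b\<in>Bs. good n b"
  shows "image_mset (shift v 1) (bigM v Bs mu) = bigM v Bs mu"
  unfolding bigM_def image_sum image_repeat
proof (intro sum.cong refl)
  fix b assume "b \<in> Bs"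
  then have "blk (fst b) (snd b) \<subseteq> {..<v}" using g v by (intro blk_sub) (auto simp: good_def)
  then show "repeat_mset (mu b) (image_mset (shift v 1) (orbM v (blk (fst b) (snd b)))) =
        repeat_mset (mu b) (orbM v (blk (fst b) (snd b)))" using image_orbM[of "blk (fst b) (snd b)" v] by simp
qed


lemma orbit_shift:
  assumes "B \<subseteq> {..<v}" "k < v"
  shows "orbit v (shift v k B) = orbit v B"
proof -
  have "shift v j (shift v k B) \<in> orbit v B" if "j < v" for j
    unfolding shift_shift orbit_def using shift_mod[of v "j+k" B] assms
    by (metis (mono_tags, lifting) mem_Collect_eq mod_less_divisor zero_less_iff_neq_zero not_less0)
  moreover have "shift v m B \<in> orbit v (shift v k B)" if m: "m < v" for m
  proof -
    have "((m + v - k) mod v + k) mod v = (m + v - k + k) mod v" by (simp add: mod_add_left_eq)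
    also have "m + v - k + k = m + v" using assms by simp
    finally have e: "((m + v - k) mod v + k) mod v = m" using m by simp
    have "shift v ((m + v - k) mod v) (shift v k B) = shift v m B"
      unfolding shift_shift using shift_mod[of v "(m + v - k) mod v + k" B] e by simp
    moreover have "(m + v - k) mod v < v" using m by simp
    ultimately show ?thesis unfolding orbit_def by blast
  qed
  ultimately show ?thesis unfolding orbit_def by blast
qed

lemma unshift:
  fixes x k v :: nat
  assumes "x < v" "k < v"
  shows "((x + k) mod v + v - k) mod v = x"
proof (cases "x + k < v")
  case True
  then show ?thesis using assms by simp
next
  case False
  then have "(x + k) mod v = x + k - v" using assms mod2v[of "x+k" v] by simp
  then show ?thesis using False assms by simp
qed

lemma inj_shift: "(k::nat) < v \<Longrightarrow> inj_on (\<lambda>x. (x + k) mod v) {..<v}"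
  by (rule inj_on_inverseI[where g = "\<lambda>y. (y + v - k) mod v"]) (simp add: unshift)

lemma blk_card: "1 \<le> p \<Longrightarrow> 1 \<le> q \<Longrightarrow> card (blk p q) = 3"
  unfolding blk_def by simp

lemma fine_bigM:
  assumes v: "v = 6*n+1" and fin: "finite Bs" and g: "\<forall>b\<in>Bs. good n b" and t: "1 \<le> t"
  shows "fine_c v (bigM v Bs mu) t = card {b\<in>Bs. mu b = t}"
proof -
  let ?M = "bigM v Bs mu"
  let ?O = "\<lambda>b. orbit v (blk (fst b) (snd b))"
  have sub: "blk (fst b) (snd b) \<subseteq> {..<v}" if "b \<in> Bs" for b
    using g that v by (intro blk_sub) (auto simp: good_def)
  have s0: "shift v 0 (blk (fst b) (snd b)) = blk (fst b) (snd b)" if "b \<in> Bs" for b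
    using shift_0[OF sub[OF that]] .
  have S: "{orbit v B | B. B \<in># ?M \<and> count ?M B = t} = ?O ` {b\<in>Bs. mu b = t}"
  proof (intro equalityI subsetI)
    fix X assume "X \<in> {orbit v B | B. B \<in># ?M \<and> count ?M B = t}"
    then obtain B where B: "X = orbit v B" "B \<in># ?M" "count ?M B = t" by blast
    obtain b k where bk: "b \<in> Bs" "k < v" "B = shift v k (blk (fst b) (snd b))"
      using mem_bigM[OF B(2) fin] by blast
    have "count ?M B = mu b" using count_bigM[OF v fin g, of b k] bk g by simp
    then have "mu b = t" using B by simp
    moreover have "X = ?O b" using B(1) bk orbit_shift[OF sub[OF bk(1)] bk(2)] by simp
    ultimately show "X \<in> ?O ` {b\<in>Bs. mu b = t}" using bk by blast
  next
    fix X assume "X \<in> ?O ` {b\<in>Bs. mu b = t}"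
    then obtain b where b: "b \<in> Bs" "mu b = t" "X = ?O b" by blast
    have "count ?M (blk (fst b) (snd b)) = mu b"
      using count_bigM[OF v fin g, of b 0] b g v s0[OF b(1)] by simp
    then have c: "count ?M (blk (fst b) (snd b)) = t" using b by simp
    then have "0 < count ?M (blk (fst b) (snd b))" using t by simp
    then have "blk (fst b) (snd b) \<in># ?M" by (simp only: count_greater_zero_iff)
    note c this
    then show "X \<in> {orbit v B | B. B \<in># ?M \<and> count ?M B = t}" using b by blast
  qed
  have inj: "inj_on ?O {b\<in>Bs. mu b = t}"
  proof (rule inj_onI)
    fix b b' assume b: "b \<in> {b\<in>Bs. mu b = t}" "b' \<in> {b\<in>Bs. mu b = t}" and e: "?O b = ?O b'"
    have "blk (fst b) (snd b) = shift v 0 (blk (fst b) (snd b))" using s0 b by simp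
    moreover have "(0::nat) < v" using v by simp
    ultimately have "blk (fst b) (snd b) \<in> ?O b" unfolding orbit_def by blast
    then obtain k where k: "k < v" "blk (fst b) (snd b) = shift v k (blk (fst b') (snd b'))"
      using e unfolding orbit_def by auto
    then have "shift v 0 (blk (fst b) (snd b)) = shift v k (blk (fst b') (snd b'))" using s0[of b] b by simp
    then show "b = b'" using lemB[OF v, of "fst b" "snd b" "fst b'" "snd b'" 0 k] g b k v
      by (auto simp: good_def prod_eq_iff)
  qed
  show ?thesis unfolding fine_c_def S using card_image[OF inj] by simp
qed

lemma cts_bigM:
  assumes v: "v = 6*n+1" and fin: "finite Bs" and g: "\<forall>b\<in>Bs. good n b"
    and H: "\<And>x y. x < v \<Longrightarrow> y < v \<Longrightarrow> x \<noteq> y \<Longrightarrow>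
       (\<Sum>b\<in>Bs. mu b * (if (y + v - x) mod v \<in> {fst b, snd b, fst b + snd b, v - fst b, v - snd b, v - fst b - snd b} then 1 else 0)) = lam"
  shows "is_CTS v lam (bigM v Bs mu)"
  unfolding is_CTS_def
proof (intro conjI allI impI ballI)
  fix B assume "B \<in># bigM v Bs mu"
  then obtain b k where bk: "b \<in> Bs" "k < v" "B = shift v k (blk (fst b) (snd b))"
    using mem_bigM[OF _ fin] by blast
  have sub: "blk (fst b) (snd b) \<subseteq> {..<v}" using g bk v by (intro blk_sub) (auto simp: good_def)
  show "B \<subseteq> {..<v}" using bk v unfolding shift_def by auto
  have "card B = card (blk (fst b) (snd b))"
    unfolding bk(3) shift_def by (rule card_image) (rule inj_on_subset[OF inj_shift[OF bk(2)] sub])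
  then show "card B = 3" using g bk blk_card by (auto simp: good_def)
next
  fix x y assume xy: "x < v" "y < v" "x \<noteq> y"
  have "size (filter_mset (\<lambda>B. {x, y} \<subseteq> B) (bigM v Bs mu)) =
      (\<Sum>b\<in>Bs. mu b * card {k. k < v \<and> {x, y} \<subseteq> shift v k (blk (fst b) (snd b))})"
    unfolding bigM_def filter_sum size_multiset_sum filter_repeat size_repeat_mset size_filter_orbM ..
  also have "\<dots> = (\<Sum>b\<in>Bs. mu b * (if (y + v - x) mod v \<in> {fst b, snd b, fst b + snd b, v - fst b, v - snd b, v - fst b - snd b} then 1 else 0))"
  proof (intro sum.cong refl)
    fix b assume "b \<in> Bs"
    then have "good n b" using g by simp
    then show "mu b * card {k. k < v \<and> {x, y} \<subseteq> shift v k (blk (fst b) (snd b))} =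
      mu b * (if (y + v - x) mod v \<in> {fst b, snd b, fst b + snd b, v - fst b, v - snd b, v - fst b - snd b} then 1 else 0)"
      using cardA[OF v _ _ _ _ xy, of "fst b" "snd b"] unfolding good_def by simp
  qed
  also have "\<dots> = lam" using H[OF xy] .
  finally show "size (filter_mset (\<lambda>B. {x, y} \<subseteq> B) (bigM v Bs mu)) = lam" .
next
  show "image_mset (shift v 1) (bigM v Bs mu) = bigM v Bs mu" using image_bigM[OF v g] .
qed


definition SK :: "nat \<Rightarrow> (nat \<Rightarrow> nat) \<Rightarrow> (nat \<Rightarrow> nat) \<Rightarrow> bool" where
  "SK n a g \<longleftrightarrow> (\<forall>j. 1 \<le> j \<and> j \<le> n \<longrightarrow> 1 \<le> a j \<and> a j + j \<le> 2*n \<and> g (a j) = j \<and> g (a j + j) = j)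
     \<and> (\<forall>m. 1 \<le> m \<and> m \<le> 2*n \<longrightarrow> 1 \<le> g m \<and> g m \<le> n \<and> (a (g m) = m \<or> a (g m) + g m = m))"

definition a0 :: "nat \<Rightarrow> nat \<Rightarrow> nat" where
  "a0 s j = (if even j then 6*s - j div 2 else if j = 1 then s else if j = 2*s+1 then s - 1
     else if j = 2*s - 1 then 2*s else if j = 4*s - 1 then 2*s+1
     else if j > 2*s+1 then (4*s - 1 - j) div 2 else (4*s + 1 - j) div 2)"

definition g0 :: "nat \<Rightarrow> nat \<Rightarrow> nat" where
  "g0 s m = (if 4*s \<le> m \<and> m \<le> 6*s - 1 then 12*s - 2*m
     else if 6*s+1 \<le> m then 2*m - 12*s
     else if m = s - 1 \<or> m = 3*s then 2*s+1
     else if m = s \<or> m = s+1 then 1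
     else if m = 2*s \<or> m = 4*s - 1 then 2*s - 1
     else if m = 2*s+1 \<or> m = 6*s then 4*s - 1
     else if m \<le> s - 2 then 4*s - 2*m - 1
     else if 3*s+1 \<le> m then 2*m - 4*s + 1
     else if m \<le> 2*s - 1 then 4*s - 2*m + 1
     else 2*m - 4*s - 1)"

context fixes s :: nat assumes s: "2 \<le> s"
begin
lemma a0E: "1 \<le> t \<Longrightarrow> t \<le> 2*s \<Longrightarrow> a0 s (2*t) = 6*s - t" by (simp add: a0_def; arith)
lemma a0_1: "a0 s 1 = s" by (simp add: a0_def; arith)
lemma a0_2: "a0 s (2*s+1) = s - 1" by (simp add: a0_def; arith)
lemma a0_3: "a0 s (2*s-1) = 2*s" using s by (simp add: a0_def; arith)
lemma a0_4: "a0 s (4*s-1) = 2*s+1" using s by (simp add: a0_def; arith)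
lemma a0_5: "s+1 \<le> t \<Longrightarrow> t \<le> 2*s-2 \<Longrightarrow> a0 s (2*t+1) = 2*s - 1 - t"
proof -
  assume t: "s+1 \<le> t" "t \<le> 2*s-2"
  have "4*s - 1 - (2*t+1) = 2*(2*s-1-t)" by simp
  then show ?thesis using s t unfolding a0_def by (simp; arith)
qed
lemma a0_6: "1 \<le> t \<Longrightarrow> t \<le> s-2 \<Longrightarrow> a0 s (2*t+1) = 2*s - t"
proof -
  assume t: "1 \<le> t" "t \<le> s-2"
  have "4*s + 1 - (2*t+1) = 2*(2*s-t)" by simp
  then show ?thesis using s t unfolding a0_def by (simp; arith)
qed
lemma g0_1: "4*s \<le> m \<Longrightarrow> m \<le> 6*s - 1 \<Longrightarrow> g0 s m = 12*s - 2*m" by (simp add: g0_def; arith)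
lemma g0_2: "6*s+1 \<le> m \<Longrightarrow> g0 s m = 2*m - 12*s" by (simp add: g0_def; arith)
lemma g0_3: "m = s - 1 \<or> m = 3*s \<Longrightarrow> g0 s m = 2*s+1" using s by (auto simp add: g0_def; arith)
lemma g0_4: "m = s \<or> m = s+1 \<Longrightarrow> g0 s m = 1" using s by (auto simp add: g0_def; arith)
lemma g0_5: "m = 2*s \<or> m = 4*s-1 \<Longrightarrow> g0 s m = 2*s-1" using s by (auto simp add: g0_def; arith)
lemma g0_6: "m = 2*s+1 \<or> m = 6*s \<Longrightarrow> g0 s m = 4*s-1" using s by (auto simp add: g0_def; arith)
lemma g0_7: "1 \<le> m \<Longrightarrow> m \<le> s-2 \<Longrightarrow> g0 s m = 4*s-2*m-1" using s by (simp add: g0_def; arith)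
lemma g0_8: "3*s+1 \<le> m \<Longrightarrow> m \<le> 4*s-2 \<Longrightarrow> g0 s m = 2*m-4*s+1" using s by (simp add: g0_def; arith)
lemma g0_9: "s+2 \<le> m \<Longrightarrow> m \<le> 2*s-1 \<Longrightarrow> g0 s m = 4*s-2*m+1" using s by (simp add: g0_def; arith)
lemma g0_10: "2*s+2 \<le> m \<Longrightarrow> m \<le> 3*s-1 \<Longrightarrow> g0 s m = 2*m-4*s-1" using s by (simp add: g0_def; arith)
end


lemma sk0G1:
  assumes s: "2 \<le> s" and c: "4*s \<le> m" "m \<le> 6*s-1" and m: "1 \<le> m" "m \<le> 8*s"
  shows "1 \<le> g0 s m \<and> g0 s m \<le> 4*s \<and> (a0 s (g0 s m) = m \<or> a0 s (g0 s m) + g0 s m = m)"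
proof -

    have g: "g0 s m = 2*(6*s - m)" by (subst g0_1[OF s]) (use c s in arith)+
    have "a0 s (2*(6*s-m)) = 6*s - (6*s - m)" by (subst a0E[OF s]) (use c s in arith)+
    then show ?thesis using g c m s by (simp; arith)
qed

lemma sk0G2:
  assumes s: "2 \<le> s" and c: "6*s+1 \<le> m" "m \<le> 8*s" and m: "1 \<le> m" "m \<le> 8*s"
  shows "1 \<le> g0 s m \<and> g0 s m \<le> 4*s \<and> (a0 s (g0 s m) = m \<or> a0 s (g0 s m) + g0 s m = m)"
proof -

    have g: "g0 s m = 2*(m - 6*s)" by (subst g0_2[OF s]) (use c s in arith)+
    have "a0 s (2*(m-6*s)) = 6*s - (m - 6*s)" by (subst a0E[OF s]) (use c m s in arith)+
    then show ?thesis using g c m s by (simp; arith)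
qed

lemma sk0G3:
  assumes s: "2 \<le> s" and c: "m = s-1" and m: "1 \<le> m" "m \<le> 8*s"
  shows "1 \<le> g0 s m \<and> g0 s m \<le> 4*s \<and> (a0 s (g0 s m) = m \<or> a0 s (g0 s m) + g0 s m = m)"
proof -

  show ?thesis using c g0_3[OF s, of m] a0_2[OF s] s by (simp; arith)
qed

lemma sk0G4:
  assumes s: "2 \<le> s" and c: "m = 3*s" and m: "1 \<le> m" "m \<le> 8*s"
  shows "1 \<le> g0 s m \<and> g0 s m \<le> 4*s \<and> (a0 s (g0 s m) = m \<or> a0 s (g0 s m) + g0 s m = m)"
proof -

  show ?thesis using c g0_3[OF s, of m] a0_2[OF s] s by (simp; arith)
qed

lemma sk0G5:
  assumes s: "2 \<le> s" and c: "m = s" and m: "1 \<le> m" "m \<le> 8*s"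
  shows "1 \<le> g0 s m \<and> g0 s m \<le> 4*s \<and> (a0 s (g0 s m) = m \<or> a0 s (g0 s m) + g0 s m = m)"
proof -

  show ?thesis using c g0_4[OF s, of m] a0_1[OF s] s by (simp; arith)
qed

lemma sk0G6:
  assumes s: "2 \<le> s" and c: "m = s+1" and m: "1 \<le> m" "m \<le> 8*s"
  shows "1 \<le> g0 s m \<and> g0 s m \<le> 4*s \<and> (a0 s (g0 s m) = m \<or> a0 s (g0 s m) + g0 s m = m)"
proof -

  show ?thesis using c g0_4[OF s, of m] a0_1[OF s] s by (simp; arith)
qed

lemma sk0G7:
  assumes s: "2 \<le> s" and c: "m = 2*s" and m: "1 \<le> m" "m \<le> 8*s"
  shows "1 \<le> g0 s m \<and> g0 s m \<le> 4*s \<and> (a0 s (g0 s m) = m \<or> a0 s (g0 s m) + g0 s m = m)"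
proof -

  show ?thesis using c g0_5[OF s, of m] a0_3[OF s] s by (simp; arith)
qed

lemma sk0G8:
  assumes s: "2 \<le> s" and c: "m = 4*s-1" and m: "1 \<le> m" "m \<le> 8*s"
  shows "1 \<le> g0 s m \<and> g0 s m \<le> 4*s \<and> (a0 s (g0 s m) = m \<or> a0 s (g0 s m) + g0 s m = m)"
proof -

  show ?thesis using c g0_5[OF s, of m] a0_3[OF s] s by (simp; arith)
qed

lemma sk0G9:
  assumes s: "2 \<le> s" and c: "m = 2*s+1" and m: "1 \<le> m" "m \<le> 8*s"
  shows "1 \<le> g0 s m \<and> g0 s m \<le> 4*s \<and> (a0 s (g0 s m) = m \<or> a0 s (g0 s m) + g0 s m = m)"
proof -

  show ?thesis using c g0_6[OF s, of m] a0_4[OF s] s by (simp; arith)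
qed

lemma sk0G10:
  assumes s: "2 \<le> s" and c: "m = 6*s" and m: "1 \<le> m" "m \<le> 8*s"
  shows "1 \<le> g0 s m \<and> g0 s m \<le> 4*s \<and> (a0 s (g0 s m) = m \<or> a0 s (g0 s m) + g0 s m = m)"
proof -

  show ?thesis using c g0_6[OF s, of m] a0_4[OF s] s by (simp; arith)
qed

lemma sk0G11:
  assumes s: "2 \<le> s" and c: "1 \<le> m" "m \<le> s-2" and m: "1 \<le> m" "m \<le> 8*s"
  shows "1 \<le> g0 s m \<and> g0 s m \<le> 4*s \<and> (a0 s (g0 s m) = m \<or> a0 s (g0 s m) + g0 s m = m)"
proof -

    have g: "g0 s m = 2*(2*s - m - 1) + 1" by (subst g0_7[OF s]) (use c m s  in arith)+
    have "a0 s (2*(2*s - m - 1) + 1) = 2*s - 1 - (2*s - m - 1)" by (subst a0_5[OF s]) (use c m s in arith)+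
    then show ?thesis using g c m s by (simp; arith)
qed

lemma sk0G12:
  assumes s: "2 \<le> s" and c: "3*s+1 \<le> m" "m \<le> 4*s-2" and m: "1 \<le> m" "m \<le> 8*s"
  shows "1 \<le> g0 s m \<and> g0 s m \<le> 4*s \<and> (a0 s (g0 s m) = m \<or> a0 s (g0 s m) + g0 s m = m)"
proof -

    have g: "g0 s m = 2*(m - 2*s) + 1" by (subst g0_8[OF s]) (use c s  in arith)+
    have "a0 s (2*(m - 2*s) + 1) = 2*s - 1 - (m - 2*s)" by (subst a0_5[OF s]) (use c s in arith)+
    then show ?thesis using g c m s by (simp; arith)
qed

lemma sk0G13:
  assumes s: "2 \<le> s" and c: "s+2 \<le> m" "m \<le> 2*s-1" and m: "1 \<le> m" "m \<le> 8*s"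
  shows "1 \<le> g0 s m \<and> g0 s m \<le> 4*s \<and> (a0 s (g0 s m) = m \<or> a0 s (g0 s m) + g0 s m = m)"
proof -

    have g: "g0 s m = 2*(2*s - m) + 1" by (subst g0_9[OF s]) (use c s  in arith)+
    have "a0 s (2*(2*s - m) + 1) = 2*s - (2*s - m)" by (subst a0_6[OF s]) (use c s in arith)+
    then show ?thesis using g c m s by (simp; arith)
qed

lemma sk0G14:
  assumes s: "2 \<le> s" and c: "2*s+2 \<le> m" "m \<le> 3*s-1" and m: "1 \<le> m" "m \<le> 8*s"
  shows "1 \<le> g0 s m \<and> g0 s m \<le> 4*s \<and> (a0 s (g0 s m) = m \<or> a0 s (g0 s m) + g0 s m = m)"
proof -

    have g: "g0 s m = 2*(m - 2*s - 1) + 1" by (subst g0_10[OF s]) (use c s  in arith)+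
    have "a0 s (2*(m - 2*s - 1) + 1) = 2*s - (m - 2*s - 1)" by (subst a0_6[OF s]) (use c s in arith)+
    then show ?thesis using g c m s by (simp; arith)
qed

lemma sk0G:
  assumes s: "2 \<le> s" and m: "1 \<le> m" "m \<le> 8*s"
  shows "1 \<le> g0 s m \<and> g0 s m \<le> 4*s \<and> (a0 s (g0 s m) = m \<or> a0 s (g0 s m) + g0 s m = m)"
proof (cases "m \<le> s-2")
  case True
  show ?thesis by (rule sk0G11[OF s]) (use True  m s in arith)+
next
  case False
  then have L0: "s-2 < m" by simp
  show ?thesis
  proof (cases "m \<le> s-1")
    case True
    show ?thesis by (rule sk0G3[OF s]) (use True L0 m s in arith)+
  next
    case False
    then have L1: "s-1 < m" by simp
    show ?thesis
    proof (cases "m \<le> s")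
      case True
      show ?thesis by (rule sk0G5[OF s]) (use True L1 m s in arith)+
    next
      case False
      then have L2: "s < m" by simp
      show ?thesis
      proof (cases "m \<le> s+1")
        case True
        show ?thesis by (rule sk0G6[OF s]) (use True L2 m s in arith)+
      next
        case False
        then have L3: "s+1 < m" by simp
        show ?thesis
        proof (cases "m \<le> 2*s-1")
          case True
          show ?thesis by (rule sk0G13[OF s]) (use True L3 m s in arith)+
        next
          case False
          then have L4: "2*s-1 < m" by simp
          show ?thesis
          proof (cases "m \<le> 2*s")
            case True
            show ?thesis by (rule sk0G7[OF s]) (use True L4 m s in arith)+
          next
            case False
            then have L5: "2*s < m" by simp
            show ?thesis
            proof (cases "m \<le> 2*s+1")
              case True
              show ?thesis by (rule sk0G9[OF s]) (use True L5 m s in arith)+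
            next
              case False
              then have L6: "2*s+1 < m" by simp
              show ?thesis
              proof (cases "m \<le> 3*s-1")
                case True
                show ?thesis by (rule sk0G14[OF s]) (use True L6 m s in arith)+
              next
                case False
                then have L7: "3*s-1 < m" by simp
                show ?thesis
                proof (cases "m \<le> 3*s")
                  case True
                  show ?thesis by (rule sk0G4[OF s]) (use True L7 m s in arith)+
                next
                  case False
                  then have L8: "3*s < m" by simp
                  show ?thesis
                  proof (cases "m \<le> 4*s-2")
                    case True
                    show ?thesis by (rule sk0G12[OF s]) (use True L8 m s in arith)+
                  next
                    case False
                    then have L9: "4*s-2 < m" by simp
                    show ?thesis
                    proof (cases "m \<le> 4*s-1")
                      case True
                      show ?thesis by (rule sk0G8[OF s]) (use True L9 m s in arith)+
                    next
                      case False
                      then have L10: "4*s-1 < m" by simp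
                      show ?thesis
                      proof (cases "m \<le> 6*s-1")
                        case True
                        show ?thesis by (rule sk0G1[OF s]) (use True L10 m s in arith)+
                      next
                        case False
                        then have L11: "6*s-1 < m" by simp
                        show ?thesis
                        proof (cases "m \<le> 6*s")
                          case True
                          show ?thesis by (rule sk0G10[OF s]) (use True L11 m s in arith)+
                        next
                          case False
                          then have L12: "6*s < m" by simp
                          show ?thesis by (rule sk0G2[OF s]) (use L12 m s in arith)+
                        qed
                      qed
                    qed
                  qed
                qed
              qed
            qed
          qed
        qed
      qed
    qed
  qed
qed

lemma sk0A_e:
  assumes s: "2 \<le> s" and c: "j = 2*t" "1 \<le> t" "t \<le> 2*s"
  shows "1 \<le> a0 s j \<and> a0 s j + j \<le> 2*(4*s) \<and> g0 s (a0 s j) = j \<and> g0 s (a0 s j + j) = j"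
proof -
  have a: "a0 s j = 6*s - t" unfolding c(1) by (subst a0E[OF s]) (use c s in arith)+
  have g1: "g0 s (6*s - t) = j" by (subst g0_1[OF s]) (use c s in arith)+
  have g2: "g0 s (6*s - t + j) = j" by (subst g0_2[OF s]) (use c s in arith)+
  have b: "1 \<le> 6*s - t" "6*s - t + j \<le> 2*(4*s)" using c s by arith+
  show ?thesis using a g1 g2 b by simp
qed

lemma sk0A_1:
  assumes s: "2 \<le> s" and c: "j = 1"
  shows "1 \<le> a0 s j \<and> a0 s j + j \<le> 2*(4*s) \<and> g0 s (a0 s j) = j \<and> g0 s (a0 s j + j) = j"
proof -
  have a: "a0 s j = s" unfolding c(1) by (subst a0_1[OF s]) (use c s in arith)+
  have g1: "g0 s (s) = j" by (subst g0_4[OF s]) (use c s in arith)+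
  have g2: "g0 s (s + j) = j" by (subst g0_4[OF s]) (use c s in arith)+
  have b: "1 \<le> s" "s + j \<le> 2*(4*s)" using c s by arith+
  show ?thesis using a g1 g2 b by simp
qed

lemma sk0A_2:
  assumes s: "2 \<le> s" and c: "j = 2*s - 1"
  shows "1 \<le> a0 s j \<and> a0 s j + j \<le> 2*(4*s) \<and> g0 s (a0 s j) = j \<and> g0 s (a0 s j + j) = j"
proof -
  have a: "a0 s j = 2*s" unfolding c(1) by (subst a0_3[OF s]) (use c s in arith)+
  have g1: "g0 s (2*s) = j" by (subst g0_5[OF s]) (use c s in arith)+
  have g2: "g0 s (2*s + j) = j" by (subst g0_5[OF s]) (use c s in arith)+
  have b: "1 \<le> 2*s" "2*s + j \<le> 2*(4*s)" using c s by arith+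
  show ?thesis using a g1 g2 b by simp
qed

lemma sk0A_3:
  assumes s: "2 \<le> s" and c: "j = 2*s + 1"
  shows "1 \<le> a0 s j \<and> a0 s j + j \<le> 2*(4*s) \<and> g0 s (a0 s j) = j \<and> g0 s (a0 s j + j) = j"
proof -
  have a: "a0 s j = s - 1" unfolding c(1) by (subst a0_2[OF s]) (use c s in arith)+
  have g1: "g0 s (s - 1) = j" by (subst g0_3[OF s]) (use c s in arith)+
  have g2: "g0 s (s - 1 + j) = j" by (subst g0_3[OF s]) (use c s in arith)+
  have b: "1 \<le> s - 1" "s - 1 + j \<le> 2*(4*s)" using c s by arith+
  show ?thesis using a g1 g2 b by simp
qed

lemma sk0A_4:
  assumes s: "2 \<le> s" and c: "j = 4*s - 1"
  shows "1 \<le> a0 s j \<and> a0 s j + j \<le> 2*(4*s) \<and> g0 s (a0 s j) = j \<and> g0 s (a0 s j + j) = j"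
proof -
  have a: "a0 s j = 2*s+1" unfolding c(1) by (subst a0_4[OF s]) (use c s in arith)+
  have g1: "g0 s (2*s+1) = j" by (subst g0_6[OF s]) (use c s in arith)+
  have g2: "g0 s (2*s+1 + j) = j" by (subst g0_6[OF s]) (use c s in arith)+
  have b: "1 \<le> 2*s+1" "2*s+1 + j \<le> 2*(4*s)" using c s by arith+
  show ?thesis using a g1 g2 b by simp
qed

lemma sk0A_5:
  assumes s: "2 \<le> s" and c: "j = 2*t+1" "s+1 \<le> t" "t \<le> 2*s-2"
  shows "1 \<le> a0 s j \<and> a0 s j + j \<le> 2*(4*s) \<and> g0 s (a0 s j) = j \<and> g0 s (a0 s j + j) = j"
proof -
  define u where "u = 2*s - 1 - t"
  have u: "u + t + 1 = 2*s" "1 \<le> u" "u \<le> s - 2" using c s unfolding u_def by arith+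
  have a: "a0 s j = u" unfolding c(1) u_def by (rule a0_5[OF s c(2,3)])
  have "g0 s u = 4*s - 2*u - 1" by (rule g0_7[OF s u(2,3)])
  then have g1: "g0 s u = j" using u c by simp
  have "3*s+1 \<le> u + j" "u + j \<le> 4*s-2" using u c by simp_all
  then have "g0 s (u + j) = 2*(u+j) - 4*s + 1" by (rule g0_8[OF s])
  then have g2: "g0 s (u + j) = j" using u c by simp
  have b: "1 \<le> u" "u + j \<le> 2*(4*s)" using u c by simp_all
  show ?thesis using a g1 g2 b by simp
qed

lemma sk0A_6:
  assumes s: "2 \<le> s" and c: "j = 2*t+1" "1 \<le> t" "t \<le> s-2"
  shows "1 \<le> a0 s j \<and> a0 s j + j \<le> 2*(4*s) \<and> g0 s (a0 s j) = j \<and> g0 s (a0 s j + j) = j"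
proof -
  define u where "u = 2*s - t"
  have u: "u + t = 2*s" "s+2 \<le> u" "u \<le> 2*s - 1" using c s unfolding u_def by arith+
  have a: "a0 s j = u" unfolding c(1) u_def by (rule a0_6[OF s c(2,3)])
  have "g0 s u = 4*s - 2*u + 1" by (rule g0_9[OF s u(2,3)])
  then have g1: "g0 s u = j" using u c by simp
  have "2*s+2 \<le> u + j" "u + j \<le> 3*s-1" using u c by simp_all
  then have "g0 s (u + j) = 2*(u+j) - 4*s - 1" by (rule g0_10[OF s])
  then have g2: "g0 s (u + j) = j" using u c by simp
  have b: "1 \<le> u" "u + j \<le> 2*(4*s)" using u c by simp_all
  show ?thesis using a g1 g2 b by simp
qed

lemma sk0:
  assumes s: "2 \<le> s"
  shows "SK (4*s) (a0 s) (g0 s)"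
  unfolding SK_def
proof (rule conjI; intro allI impI)
  fix j assume j: "1 \<le> j \<and> j \<le> 4*s"
  show "1 \<le> a0 s j \<and> a0 s j + j \<le> 2*(4*s) \<and> g0 s (a0 s j) = j \<and> g0 s (a0 s j + j) = j"
  proof (cases "even j")
    case True
    then obtain t where t: "j = 2*t" by blast
    then show ?thesis using j by (intro sk0A_e[OF s, of j t]) auto
  next
    case False
    then obtain t where t: "j = 2*t+1" using oddE by blast
    then have tr: "t \<le> 2*s - 1" using j by auto
    show ?thesis
    proof (cases "t = 0")
      case True then show ?thesis using t by (intro sk0A_1[OF s]) simp
    next
      case False
      then have L0: "1 \<le> t" by simp
      show ?thesis
      proof (cases "t \<le> s-2")
        case True then show ?thesis using t L0 by (intro sk0A_6[OF s, of j t]) simp_all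
      next
        case False
        then have L1: "s-1 \<le> t" by simp
        show ?thesis
        proof (cases "t = s-1")
          case True then show ?thesis using t s by (intro sk0A_2[OF s]) simp
        next
          case False
          then have L2: "s \<le> t" using L1 by simp
          show ?thesis
          proof (cases "t = s")
            case True then show ?thesis using t s by (intro sk0A_3[OF s]) simp
          next
            case False
            then have L3: "s+1 \<le> t" using L2 by simp
            show ?thesis
            proof (cases "t \<le> 2*s-2")
              case True then show ?thesis using t L3 by (intro sk0A_5[OF s, of j t]) simp_all
            next
              case False
              then have "t = 2*s-1" using tr by simp
              then show ?thesis using t s by (intro sk0A_4[OF s]) simp
            qed
          qed
        qed
      qed
    qed
  qed
next
  fix m assume m: "1 \<le> m \<and> m \<le> 2*(4*s)"
  then show "1 \<le> g0 s m \<and> g0 s m \<le> 4*s \<and> (a0 s (g0 s m) = m \<or> a0 s (g0 s m) + g0 s m = m)" using sk0G[OF s, of m] by simp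
qed


definition a1 :: "nat \<Rightarrow> nat \<Rightarrow> nat" where
  "a1 s j = (if even j then 6*s+2 - j div 2 else if j = 4*s+1 then 2*s+1 else if j = 1 then 3*s
     else if j = 2*s - 1 then 1 else if 2*s+1 \<le> j then (4*s+3-j) div 2 else (4*s+1-j) div 2)"

definition g1 :: "nat \<Rightarrow> nat \<Rightarrow> nat" where
  "g1 s m = (if 4*s+2 \<le> m \<and> m \<le> 6*s+1 then 12*s+4 - 2*m
     else if 6*s+3 \<le> m then 2*m - 12*s - 4
     else if m = 2*s+1 \<or> m = 6*s+2 then 4*s+1
     else if m = 3*s \<or> m = 3*s+1 then 1
     else if m = 1 \<or> m = 2*s then 2*s - 1
     else if m \<le> s+1 then 4*s+3 - 2*m
     else if 3*s+2 \<le> m then 2*m - 4*s - 3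
     else if m \<le> 2*s - 1 then 4*s+1 - 2*m
     else 2*m - 4*s - 1)"

context fixes s :: nat assumes s: "2 \<le> s"
begin
lemma a1E: "1 \<le> t \<Longrightarrow> t \<le> 2*s \<Longrightarrow> a1 s (2*t) = 6*s+2 - t" by (simp add: a1_def; arith)
lemma a1_1: "a1 s (4*s+1) = 2*s+1" by (simp add: a1_def; arith)
lemma a1_2: "a1 s 1 = 3*s" using s by (simp add: a1_def; arith)
lemma a1_3: "a1 s (2*s-1) = 1" using s by (simp add: a1_def; arith)
lemma a1_5: "s \<le> t \<Longrightarrow> t \<le> 2*s-1 \<Longrightarrow> a1 s (2*t+1) = 2*s+1 - t"
proof -
  assume t: "s \<le> t" "t \<le> 2*s-1"
  have "4*s + 3 - (2*t+1) = 2*(2*s+1-t)" by simp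
  then show ?thesis using s t unfolding a1_def by (simp; arith)
qed
lemma a1_6: "1 \<le> t \<Longrightarrow> t \<le> s-2 \<Longrightarrow> a1 s (2*t+1) = 2*s - t"
proof -
  assume t: "1 \<le> t" "t \<le> s-2"
  have "4*s + 1 - (2*t+1) = 2*(2*s-t)" by simp
  then show ?thesis using s t unfolding a1_def by (simp; arith)
qed
lemma h1_1: "4*s+2 \<le> m \<Longrightarrow> m \<le> 6*s+1 \<Longrightarrow> g1 s m = 12*s+4 - 2*m" by (simp add: g1_def; arith)
lemma h1_2: "6*s+3 \<le> m \<Longrightarrow> g1 s m = 2*m - 12*s - 4" by (simp add: g1_def; arith)
lemma h1_3: "m = 2*s+1 \<or> m = 6*s+2 \<Longrightarrow> g1 s m = 4*s+1" using s by (auto simp add: g1_def; arith)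
lemma h1_4: "m = 3*s \<or> m = 3*s+1 \<Longrightarrow> g1 s m = 1" using s by (auto simp add: g1_def; arith)
lemma h1_5: "m = 1 \<or> m = 2*s \<Longrightarrow> g1 s m = 2*s - 1" using s by (auto simp add: g1_def; arith)
lemma h1_6: "2 \<le> m \<Longrightarrow> m \<le> s+1 \<Longrightarrow> g1 s m = 4*s+3 - 2*m" using s by (simp add: g1_def; arith)
lemma h1_7: "3*s+2 \<le> m \<Longrightarrow> m \<le> 4*s+1 \<Longrightarrow> g1 s m = 2*m - 4*s - 3" using s by (simp add: g1_def; arith)
lemma h1_8: "s+2 \<le> m \<Longrightarrow> m \<le> 2*s-1 \<Longrightarrow> g1 s m = 4*s+1 - 2*m" using s by (simp add: g1_def; arith)
lemma h1_9: "2*s+2 \<le> m \<Longrightarrow> m \<le> 3*s-1 \<Longrightarrow> g1 s m = 2*m - 4*s - 1" using s by (simp add: g1_def; arith)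
end

lemma sk1A_e:
  assumes s: "2 \<le> s" and c: "j = 2*t" "1 \<le> t" "t \<le> 2*s"
  shows "1 \<le> a1 s j \<and> a1 s j + j \<le> 2*(4*s+1) \<and> g1 s (a1 s j) = j \<and> g1 s (a1 s j + j) = j"
proof -
  define u where "u = 6*s+2 - t"
  have u: "u + t = 6*s+2" "4*s+2 \<le> u" "u \<le> 6*s+1" using c s unfolding u_def by arith+
  have a: "a1 s j = u" unfolding c(1) u_def by (rule a1E[OF s c(2,3)])
  have "g1 s u = 12*s+4 - 2*u" by (rule h1_1[OF s u(2,3)])
  then have g1: "g1 s u = j" using u c by simp
  have "6*s+3 \<le> u + j" using u c by simp_all
  then have "g1 s (u + j) = 2*(u+j) - 12*s - 4" by (rule h1_2[OF s])
  then have g2: "g1 s (u + j) = j" using u c by simp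
  have b: "1 \<le> u" "u + j \<le> 2*(4*s+1)" using u c by simp_all
  show ?thesis using a g1 g2 b by simp
qed

lemma sk1A_5:
  assumes s: "2 \<le> s" and c: "j = 2*t+1" "s \<le> t" "t \<le> 2*s-1"
  shows "1 \<le> a1 s j \<and> a1 s j + j \<le> 2*(4*s+1) \<and> g1 s (a1 s j) = j \<and> g1 s (a1 s j + j) = j"
proof -
  define u where "u = 2*s+1 - t"
  have u: "u + t = 2*s+1" "2 \<le> u" "u \<le> s+1" using c s unfolding u_def by arith+
  have a: "a1 s j = u" unfolding c(1) u_def by (rule a1_5[OF s c(2,3)])
  have "g1 s u = 4*s+3 - 2*u" by (rule h1_6[OF s u(2,3)])
  then have g1: "g1 s u = j" using u c by simp
  have "3*s+2 \<le> u + j" "u + j \<le> 4*s+1" using u c by simp_all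
  then have "g1 s (u + j) = 2*(u+j) - 4*s - 3" by (rule h1_7[OF s])
  then have g2: "g1 s (u + j) = j" using u c by simp
  have b: "1 \<le> u" "u + j \<le> 2*(4*s+1)" using u c by simp_all
  show ?thesis using a g1 g2 b by simp
qed

lemma sk1A_6:
  assumes s: "2 \<le> s" and c: "j = 2*t+1" "1 \<le> t" "t \<le> s-2"
  shows "1 \<le> a1 s j \<and> a1 s j + j \<le> 2*(4*s+1) \<and> g1 s (a1 s j) = j \<and> g1 s (a1 s j + j) = j"
proof -
  define u where "u = 2*s - t"
  have u: "u + t = 2*s" "s+2 \<le> u" "u \<le> 2*s-1" using c s unfolding u_def by arith+
  have a: "a1 s j = u" unfolding c(1) u_def by (rule a1_6[OF s c(2,3)])
  have "g1 s u = 4*s+1 - 2*u" by (rule h1_8[OF s u(2,3)])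
  then have g1: "g1 s u = j" using u c by simp
  have "2*s+2 \<le> u + j" "u + j \<le> 3*s-1" using u c by simp_all
  then have "g1 s (u + j) = 2*(u+j) - 4*s - 1" by (rule h1_9[OF s])
  then have g2: "g1 s (u + j) = j" using u c by simp
  have b: "1 \<le> u" "u + j \<le> 2*(4*s+1)" using u c by simp_all
  show ?thesis using a g1 g2 b by simp
qed

lemma sk1A_1:
  assumes s: "2 \<le> s" and c: "j = 4*s+1"
  shows "1 \<le> a1 s j \<and> a1 s j + j \<le> 2*(4*s+1) \<and> g1 s (a1 s j) = j \<and> g1 s (a1 s j + j) = j"
proof -
  have a: "a1 s j = 2*s+1" unfolding c by (rule a1_1[OF s])
  have g1: "g1 s (2*s+1) = j" using h1_3[OF s, of "2*s+1"] c s by simp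
  have g2: "g1 s (2*s+1 + j) = j" using h1_3[OF s, of "2*s+1 + j"] c s by simp
  have b: "1 \<le> 2*s+1" "2*s+1 + j \<le> 2*(4*s+1)" using c s by simp_all
  show ?thesis using a g1 g2 b by simp
qed

lemma sk1A_2:
  assumes s: "2 \<le> s" and c: "j = 1"
  shows "1 \<le> a1 s j \<and> a1 s j + j \<le> 2*(4*s+1) \<and> g1 s (a1 s j) = j \<and> g1 s (a1 s j + j) = j"
proof -
  have a: "a1 s j = 3*s" unfolding c by (rule a1_2[OF s])
  have g1: "g1 s (3*s) = j" using h1_4[OF s, of "3*s"] c s by simp
  have g2: "g1 s (3*s + j) = j" using h1_4[OF s, of "3*s + j"] c s by simp
  have b: "1 \<le> 3*s" "3*s + j \<le> 2*(4*s+1)" using c s by simp_all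
  show ?thesis using a g1 g2 b by simp
qed

lemma sk1A_3:
  assumes s: "2 \<le> s" and c: "j = 2*s-1"
  shows "1 \<le> a1 s j \<and> a1 s j + j \<le> 2*(4*s+1) \<and> g1 s (a1 s j) = j \<and> g1 s (a1 s j + j) = j"
proof -
  have a: "a1 s j = 1" unfolding c by (rule a1_3[OF s])
  have g1: "g1 s (1) = j" using h1_5[OF s, of "1"] c s by simp
  have g2: "g1 s (1 + j) = j" using h1_5[OF s, of "1 + j"] c s by simp
  have b: "(1::nat) \<le> 1" "1 + j \<le> 2*(4*s+1)" using c s by simp_all
  show ?thesis using a g1 g2 b by simp
qed

lemma sk1G_6:
  assumes s: "2 \<le> s" and c: "2 \<le> m" "m \<le> s+1"
  shows "1 \<le> g1 s m \<and> g1 s m \<le> 4*s+1 \<and> (a1 s (g1 s m) = m \<or> a1 s (g1 s m) + g1 s m = m)"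
proof -
  define t where "t = 2*s+1 - m"
  have t: "s \<le> t" "t \<le> 2*s-1" "t + m = 2*s+1" using c s unfolding t_def by arith+
  have "g1 s m = 4*s+3 - 2*m" by (rule h1_6[OF s c])
  then have g: "g1 s m = 2*t+1" using t c s by arith
  have a: "a1 s (2*t+1) = 2*s+1 - t" by (rule a1_5[OF s t(1,2)])
  have e: "2*s+1 - t = m \<or> 2*s+1 - t + (2*t+1) = m" using t c s by arith
  have b: "1 \<le> 2*t+1" "2*t+1 \<le> 4*s+1" using t s by arith+
  show ?thesis unfolding g using a e b by simp
qed

lemma sk1G_8:
  assumes s: "2 \<le> s" and c: "s+2 \<le> m" "m \<le> 2*s-1"
  shows "1 \<le> g1 s m \<and> g1 s m \<le> 4*s+1 \<and> (a1 s (g1 s m) = m \<or> a1 s (g1 s m) + g1 s m = m)"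
proof -
  define t where "t = 2*s - m"
  have t: "1 \<le> t" "t \<le> s-2" "t + m = 2*s" using c s unfolding t_def by arith+
  have "g1 s m = 4*s+1 - 2*m" by (rule h1_8[OF s c])
  then have g: "g1 s m = 2*t+1" using t c s by arith
  have a: "a1 s (2*t+1) = 2*s - t" by (rule a1_6[OF s t(1,2)])
  have e: "2*s - t = m \<or> 2*s - t + (2*t+1) = m" using t c s by arith
  have b: "1 \<le> 2*t+1" "2*t+1 \<le> 4*s+1" using t s by arith+
  show ?thesis unfolding g using a e b by simp
qed

lemma sk1G_9:
  assumes s: "2 \<le> s" and c: "2*s+2 \<le> m" "m \<le> 3*s-1"
  shows "1 \<le> g1 s m \<and> g1 s m \<le> 4*s+1 \<and> (a1 s (g1 s m) = m \<or> a1 s (g1 s m) + g1 s m = m)"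
proof -
  define t where "t = m - 2*s - 1"
  have t: "1 \<le> t" "t \<le> s-2" "t + 2*s + 1 = m" using c s unfolding t_def by arith+
  have "g1 s m = 2*m - 4*s - 1" by (rule h1_9[OF s c])
  then have g: "g1 s m = 2*t+1" using t c s by arith
  have a: "a1 s (2*t+1) = 2*s - t" by (rule a1_6[OF s t(1,2)])
  have e: "2*s - t = m \<or> 2*s - t + (2*t+1) = m" using t c s by arith
  have b: "1 \<le> 2*t+1" "2*t+1 \<le> 4*s+1" using t s by arith+
  show ?thesis unfolding g using a e b by simp
qed

lemma sk1G_7:
  assumes s: "2 \<le> s" and c: "3*s+2 \<le> m" "m \<le> 4*s+1"
  shows "1 \<le> g1 s m \<and> g1 s m \<le> 4*s+1 \<and> (a1 s (g1 s m) = m \<or> a1 s (g1 s m) + g1 s m = m)"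
proof -
  define t where "t = m - 2*s - 2"
  have t: "s \<le> t" "t \<le> 2*s-1" "t + 2*s + 2 = m" using c s unfolding t_def by arith+
  have "g1 s m = 2*m - 4*s - 3" by (rule h1_7[OF s c])
  then have g: "g1 s m = 2*t+1" using t c s by arith
  have a: "a1 s (2*t+1) = 2*s+1 - t" by (rule a1_5[OF s t(1,2)])
  have e: "2*s+1 - t = m \<or> 2*s+1 - t + (2*t+1) = m" using t c s by arith
  have b: "1 \<le> 2*t+1" "2*t+1 \<le> 4*s+1" using t s by arith+
  show ?thesis unfolding g using a e b by simp
qed

lemma sk1G_1:
  assumes s: "2 \<le> s" and c: "4*s+2 \<le> m" "m \<le> 6*s+1"
  shows "1 \<le> g1 s m \<and> g1 s m \<le> 4*s+1 \<and> (a1 s (g1 s m) = m \<or> a1 s (g1 s m) + g1 s m = m)"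
proof -
  define t where "t = 6*s+2 - m"
  have t: "1 \<le> t" "t \<le> 2*s" "t + m = 6*s+2" using c s unfolding t_def by arith+
  have "g1 s m = 12*s+4 - 2*m" by (rule h1_1[OF s c])
  then have g: "g1 s m = 2*t" using t c s by arith
  have a: "a1 s (2*t) = 6*s+2 - t" by (rule a1E[OF s t(1,2)])
  have e: "6*s+2 - t = m \<or> 6*s+2 - t + (2*t) = m" using t c s by arith
  have b: "1 \<le> 2*t" "2*t \<le> 4*s+1" using t s by arith+
  show ?thesis unfolding g using a e b by simp
qed

lemma sk1G_2:
  assumes s: "2 \<le> s" and c: "6*s+3 \<le> m" "m \<le> 8*s+2"
  shows "1 \<le> g1 s m \<and> g1 s m \<le> 4*s+1 \<and> (a1 s (g1 s m) = m \<or> a1 s (g1 s m) + g1 s m = m)"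
proof -
  define t where "t = m - 6*s - 2"
  have t: "1 \<le> t" "t \<le> 2*s" "t + 6*s + 2 = m" using c s unfolding t_def by arith+
  have "g1 s m = 2*m - 12*s - 4" by (rule h1_2[OF s c(1)])
  then have g: "g1 s m = 2*t" using t c s by arith
  have a: "a1 s (2*t) = 6*s+2 - t" by (rule a1E[OF s t(1,2)])
  have e: "6*s+2 - t = m \<or> 6*s+2 - t + (2*t) = m" using t c s by arith
  have b: "1 \<le> 2*t" "2*t \<le> 4*s+1" using t s by arith+
  show ?thesis unfolding g using a e b by simp
qed

lemma sk1G_a:
  assumes s: "2 \<le> s" and c: "m = 1"
  shows "1 \<le> g1 s m \<and> g1 s m \<le> 4*s+1 \<and> (a1 s (g1 s m) = m \<or> a1 s (g1 s m) + g1 s m = m)"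
proof -
  have g: "g1 s m = 2*s-1" using h1_5[OF s, of m] c by simp
  have a: "a1 s (2*s-1) = 1" by (rule a1_3[OF s])
  have e: "1 = m \<or> 1 + (2*s-1) = m" using c s by arith
  have b: "1 \<le> 2*s-1" "2*s-1 \<le> 4*s+1" using s by arith+
  show ?thesis unfolding g using a e b by simp
qed

lemma sk1G_b:
  assumes s: "2 \<le> s" and c: "m = 2*s"
  shows "1 \<le> g1 s m \<and> g1 s m \<le> 4*s+1 \<and> (a1 s (g1 s m) = m \<or> a1 s (g1 s m) + g1 s m = m)"
proof -
  have g: "g1 s m = 2*s-1" using h1_5[OF s, of m] c by simp
  have a: "a1 s (2*s-1) = 1" by (rule a1_3[OF s])
  have e: "1 = m \<or> 1 + (2*s-1) = m" using c s by arith
  have b: "1 \<le> 2*s-1" "2*s-1 \<le> 4*s+1" using s by arith+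
  show ?thesis unfolding g using a e b by simp
qed

lemma sk1G_c:
  assumes s: "2 \<le> s" and c: "m = 2*s+1"
  shows "1 \<le> g1 s m \<and> g1 s m \<le> 4*s+1 \<and> (a1 s (g1 s m) = m \<or> a1 s (g1 s m) + g1 s m = m)"
proof -
  have g: "g1 s m = 4*s+1" using h1_3[OF s, of m] c by simp
  have a: "a1 s (4*s+1) = 2*s+1" by (rule a1_1[OF s])
  have e: "2*s+1 = m \<or> 2*s+1 + (4*s+1) = m" using c s by arith
  have b: "1 \<le> 4*s+1" "4*s+1 \<le> 4*s+1" using s by arith+
  show ?thesis unfolding g using a e b by simp
qed

lemma sk1G_d:
  assumes s: "2 \<le> s" and c: "m = 6*s+2"
  shows "1 \<le> g1 s m \<and> g1 s m \<le> 4*s+1 \<and> (a1 s (g1 s m) = m \<or> a1 s (g1 s m) + g1 s m = m)"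
proof -
  have g: "g1 s m = 4*s+1" using h1_3[OF s, of m] c by simp
  have a: "a1 s (4*s+1) = 2*s+1" by (rule a1_1[OF s])
  have e: "2*s+1 = m \<or> 2*s+1 + (4*s+1) = m" using c s by arith
  have b: "1 \<le> 4*s+1" "4*s+1 \<le> 4*s+1" using s by arith+
  show ?thesis unfolding g using a e b by simp
qed

lemma sk1G_e:
  assumes s: "2 \<le> s" and c: "m = 3*s"
  shows "1 \<le> g1 s m \<and> g1 s m \<le> 4*s+1 \<and> (a1 s (g1 s m) = m \<or> a1 s (g1 s m) + g1 s m = m)"
proof -
  have g: "g1 s m = 1" using h1_4[OF s, of m] c by simp
  have a: "a1 s (1) = 3*s" by (rule a1_2[OF s])
  have e: "3*s = m \<or> 3*s + (1) = m" using c s by arith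
  have b: "(1::nat) \<le> 1" "(1::nat) \<le> 4*s+1" using s by arith+
  show ?thesis unfolding g using a e b by simp
qed

lemma sk1G_f:
  assumes s: "2 \<le> s" and c: "m = 3*s+1"
  shows "1 \<le> g1 s m \<and> g1 s m \<le> 4*s+1 \<and> (a1 s (g1 s m) = m \<or> a1 s (g1 s m) + g1 s m = m)"
proof -
  have g: "g1 s m = 1" using h1_4[OF s, of m] c by simp
  have a: "a1 s (1) = 3*s" by (rule a1_2[OF s])
  have e: "3*s = m \<or> 3*s + (1) = m" using c s by arith
  have b: "(1::nat) \<le> 1" "(1::nat) \<le> 4*s+1" using s by arith+
  show ?thesis unfolding g using a e b by simp
qed

lemma sk1G:
  assumes s: "2 \<le> s" and m: "1 \<le> m" "m \<le> 8*s+2"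
  shows "1 \<le> g1 s m \<and> g1 s m \<le> 4*s+1 \<and> (a1 s (g1 s m) = m \<or> a1 s (g1 s m) + g1 s m = m)"
proof -
  show ?thesis
  proof (cases "m \<le> 1")
    case True
    show ?thesis by (rule sk1G_a[OF s]) (use True  m s in arith)+
  next
    case False
    then have L0: "1 < m" by simp
    show ?thesis
    proof (cases "m \<le> s+1")
      case True
      show ?thesis by (rule sk1G_6[OF s]) (use True L0 m s in arith)+
    next
      case False
      then have L1: "s+1 < m" by simp
      show ?thesis
      proof (cases "m \<le> 2*s-1")
        case True
        show ?thesis by (rule sk1G_8[OF s]) (use True L1 m s in arith)+
      next
        case False
        then have L2: "2*s-1 < m" by simp
        show ?thesis
        proof (cases "m \<le> 2*s")
          case True
          show ?thesis by (rule sk1G_b[OF s]) (use True L2 m s in arith)+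
        next
          case False
          then have L3: "2*s < m" by simp
          show ?thesis
          proof (cases "m \<le> 2*s+1")
            case True
            show ?thesis by (rule sk1G_c[OF s]) (use True L3 m s in arith)+
          next
            case False
            then have L4: "2*s+1 < m" by simp
            show ?thesis
            proof (cases "m \<le> 3*s-1")
              case True
              show ?thesis by (rule sk1G_9[OF s]) (use True L4 m s in arith)+
            next
              case False
              then have L5: "3*s-1 < m" by simp
              show ?thesis
              proof (cases "m \<le> 3*s")
                case True
                show ?thesis by (rule sk1G_e[OF s]) (use True L5 m s in arith)+
              next
                case False
                then have L6: "3*s < m" by simp
                show ?thesis
                proof (cases "m \<le> 3*s+1")
                  case True
                  show ?thesis by (rule sk1G_f[OF s]) (use True L6 m s in arith)+
                next
                  case False
                  then have L7: "3*s+1 < m" by simp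
                  show ?thesis
                  proof (cases "m \<le> 4*s+1")
                    case True
                    show ?thesis by (rule sk1G_7[OF s]) (use True L7 m s in arith)+
                  next
                    case False
                    then have L8: "4*s+1 < m" by simp
                    show ?thesis
                    proof (cases "m \<le> 6*s+1")
                      case True
                      show ?thesis by (rule sk1G_1[OF s]) (use True L8 m s in arith)+
                    next
                      case False
                      then have L9: "6*s+1 < m" by simp
                      show ?thesis
                      proof (cases "m \<le> 6*s+2")
                        case True
                        show ?thesis by (rule sk1G_d[OF s]) (use True L9 m s in arith)+
                      next
                        case False
                        then have L10: "6*s+2 < m" by simp
                        show ?thesis by (rule sk1G_2[OF s]) (use L10 m s in arith)+
                      qed
                    qed
                  qed
                qed
              qed
            qed
          qed
        qed
      qed
    qed
  qed
qed

lemma sk1: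
  assumes s: "2 \<le> s"
  shows "SK (4*s+1) (a1 s) (g1 s)"
  unfolding SK_def
proof (rule conjI; intro allI impI)
  fix j assume j: "1 \<le> j \<and> j \<le> 4*s+1"
  show "1 \<le> a1 s j \<and> a1 s j + j \<le> 2*(4*s+1) \<and> g1 s (a1 s j) = j \<and> g1 s (a1 s j + j) = j"
  proof (cases "even j")
    case True
    then obtain t where t: "j = 2*t" by blast
    then show ?thesis using j by (intro sk1A_e[OF s, of j t]) auto
  next
    case False
    then obtain t where t: "j = 2*t+1" using oddE by blast
    then have tr: "t \<le> 2*s" using j by auto
    show ?thesis
    proof (cases "t = 0")
      case True then show ?thesis using t by (intro sk1A_2[OF s]) simp
    next
      case False
      then have L0: "1 \<le> t" by simp
      show ?thesis
      proof (cases "t \<le> s-2")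
        case True then show ?thesis using t L0 by (intro sk1A_6[OF s, of j t]) simp_all
      next
        case False
        then have L1: "s-1 \<le> t" by simp
        show ?thesis
        proof (cases "t = s-1")
          case True then show ?thesis using t s by (intro sk1A_3[OF s]) simp
        next
          case False
          then have L2: "s \<le> t" using L1 by simp
          show ?thesis
          proof (cases "t \<le> 2*s-1")
            case True then show ?thesis using t L2 by (intro sk1A_5[OF s, of j t]) simp_all
          next
            case False
            then have "t = 2*s" using tr by simp
            then show ?thesis using t s by (intro sk1A_1[OF s]) simp
          qed
        qed
      qed
    qed
  qed
next
  fix m assume m: "1 \<le> m \<and> m \<le> 2*(4*s+1)"
  then show "1 \<le> g1 s m \<and> g1 s m \<le> 4*s+1 \<and> (a1 s (g1 s m) = m \<or> a1 s (g1 s m) + g1 s m = m)" using sk1G[OF s, of m] by simp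
qed


lemma sk_1: "SK 1 (\<lambda>j. 1) (\<lambda>m. 1)"
  unfolding SK_def by auto

lemma SK_I:
  assumes "\<forall>j\<in>{1..n}. 1 \<le> a j \<and> a j + j \<le> 2*n \<and> g (a j) = j \<and> g (a j + j) = j"
    and "\<forall>m\<in>{1..2*n}. 1 \<le> g m \<and> g m \<le> n \<and> (a (g m) = m \<or> a (g m) + g m = m)"
  shows "SK n a g"
  using assms unfolding SK_def by auto

definition a4 :: "nat \<Rightarrow> nat" where "a4 j = (if j=1 then 1 else if j = 2 then 4 else if j = 3 then 5 else 3)"
definition g4 :: "nat \<Rightarrow> nat" where "g4 m = (if m \<le> 2 then 1 else if m = 3 \<or> m = 7 then 4 else if m = 4 \<or> m = 6 then 2 else 3)"
definition a5 :: "nat \<Rightarrow> nat" where "a5 j = (if j = 1 then 8 else if j = 2 then 1 else if j = 3 then 4 else if j = 4 then 2 else 5)"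
definition g5 :: "nat \<Rightarrow> nat" where "g5 m = (if m = 8 \<or> m = 9 then 1 else if m = 1 \<or> m = 3 then 2 else if m = 4 \<or> m = 7 then 3 else if m = 2 \<or> m = 6 then 4 else 5)"

lemma sk_4: "SK 4 a4 g4"
proof (rule SK_I)
  have e1: "{1..4::nat} = {1,2,3,4}" by auto
  have e2: "{1..2*4::nat} = {1,2,3,4,5,6,7,8}" by auto
  show "\<forall>j\<in>{1..4}. 1 \<le> a4 j \<and> a4 j + j \<le> 2*4 \<and> g4 (a4 j) = j \<and> g4 (a4 j + j) = j"
    unfolding e1 by (simp add: a4_def g4_def)
  show "\<forall>m\<in>{1..2*4}. 1 \<le> g4 m \<and> g4 m \<le> 4 \<and> (a4 (g4 m) = m \<or> a4 (g4 m) + g4 m = m)"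
    unfolding e2 by (simp add: a4_def g4_def)
qed

lemma sk_5: "SK 5 a5 g5"
proof (rule SK_I)
  have e1: "{1..5::nat} = {1,2,3,4,5}" by auto
  have e2: "{1..2*5::nat} = {1,2,3,4,5,6,7,8,9,10}" by (simp add: atLeastAtMostSuc_conv numeral_eq_Suc insert_commute)
  show "\<forall>j\<in>{1..5}. 1 \<le> a5 j \<and> a5 j + j \<le> 2*5 \<and> g5 (a5 j) = j \<and> g5 (a5 j + j) = j"
    unfolding e1 by (simp add: a5_def g5_def)
  show "\<forall>m\<in>{1..2*5}. 1 \<le> g5 m \<and> g5 m \<le> 5 \<and> (a5 (g5 m) = m \<or> a5 (g5 m) + g5 m = m)"
    unfolding e2 by (simp add: a5_def g5_def)
qed

lemma sk_exists:
  assumes "n mod 4 = 0 \<or> n mod 4 = 1" "1 \<le> n"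
  shows "\<exists>a g. SK n a g"
proof -
  have d: "n = 1 \<or> n = 4 \<or> n = 5 \<or> (n mod 4 = 0 \<and> 8 \<le> n) \<or> (n mod 4 = 1 \<and> 9 \<le> n)"
    using assms by presburger
  consider "n = 1" | "n = 4" | "n = 5" | "n mod 4 = 0 \<and> 8 \<le> n" | "n mod 4 = 1 \<and> 9 \<le> n"
    using d by blast
  then show ?thesis
  proof cases
    case 1 then show ?thesis using sk_1 by blast
  next
    case 2 then show ?thesis using sk_4 by blast
  next
    case 3 then show ?thesis using sk_5 by blast
  next
    case 4
    then have "n = 4*(n div 4)" "2 \<le> n div 4" by presburger+
    then show ?thesis using sk0[of "n div 4"] by metis
  next
    case 5
    then have "n = 4*(n div 4) + 1" "2 \<le> n div 4" by presburger+
    then show ?thesis using sk1[of "n div 4"] by metis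
  qed
qed

lemma sk_partition:
  assumes sk: "SK n a g" and e: "1 \<le> e" "e \<le> 3*n"
  shows "\<exists>!j. 1 \<le> j \<and> j \<le> n \<and> (e = j \<or> e = a j + n \<or> e = a j + j + n)"
proof -
  have A: "\<And>j. 1 \<le> j \<Longrightarrow> j \<le> n \<Longrightarrow> 1 \<le> a j \<and> a j + j \<le> 2*n \<and> g (a j) = j \<and> g (a j + j) = j"
    using sk unfolding SK_def by blast
  have G: "\<And>m. 1 \<le> m \<Longrightarrow> m \<le> 2*n \<Longrightarrow> 1 \<le> g m \<and> g m \<le> n \<and> (a (g m) = m \<or> a (g m) + g m = m)"
    using sk unfolding SK_def by blast
  show ?thesis
  proof (cases "e \<le> n")
    case True
    show ?thesis
    proof (rule ex1I[where a = e])
      show "1 \<le> e \<and> e \<le> n \<and> (e = e \<or> e = a e + n \<or> e = a e + e + n)" using e True by simp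
      fix j assume j: "1 \<le> j \<and> j \<le> n \<and> (e = j \<or> e = a j + n \<or> e = a j + j + n)"
      then show "j = e" using A[of j] True by auto
    qed
  next
    case False
    define m where "m = e - n"
    have m: "1 \<le> m" "m \<le> 2*n" "e = m + n" using False e unfolding m_def by auto
    show ?thesis
    proof (rule ex1I[where a = "g m"])
      show "1 \<le> g m \<and> g m \<le> n \<and> (e = g m \<or> e = a (g m) + n \<or> e = a (g m) + g m + n)"
        using G[OF m(1,2)] m(3) by auto
      fix j assume j: "1 \<le> j \<and> j \<le> n \<and> (e = j \<or> e = a j + n \<or> e = a j + j + n)"
      then have "m = a j \<or> m = a j + j" using m False by auto
      then show "j = g m" using A[of j] j by auto
    qed
  qed
qed


lemma cond_e:
  fixes v n d p q :: nat
  assumes v: "v = 6*n+1" and d: "1 \<le> d" "d < v" and p: "1 \<le> p" "1 \<le> q" "p+q \<le> 3*n"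
  shows "d \<in> {p, q, p+q, v-p, v-q, v-p-q} \<longleftrightarrow> (if d \<le> 3*n then d else v - d) \<in> {p, q, p+q}"
proof (cases "d \<le> 3*n")
  case True
  then show ?thesis using v d p by auto
next
  case False
  then show ?thesis using v d p by auto
qed

lemma dd_range:
  fixes v x y :: nat
  assumes "x < v" "y < v" "x \<noteq> y"
  shows "1 \<le> (y + v - x) mod v" "(y + v - x) mod v < v"
proof -
  have "y + v - x < 2*v" using assms by simp
  then have "(y + v - x) mod v = (if y + v - x < v then y + v - x else y + v - x - v)" by (rule mod2v)
  then show "1 \<le> (y + v - x) mod v" using assms by (auto split: if_splits)
  show "(y + v - x) mod v < v" using assms by simp
qed

lemma vn: fixes v n :: nat assumes "v mod 24 = 1 \<or> v mod 24 = 7" "v \<ge> 7" "n = (v - 1) div 6"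
  shows "v = 6*n+1 \<and> (n mod 4 = 0 \<or> n mod 4 = 1) \<and> 1 \<le> n"
proof -
  define k where "k = v div 24"
  have vk: "v = 24*k + v mod 24" unfolding k_def by simp
  from assms(1) show ?thesis
  proof
    assume r: "v mod 24 = 1"
    then have v1: "v = 24*k + 1" using vk by simp
    then have "v - 1 = 6 * (4*k)" by simp
    then have n: "n = 4*k" using assms(3) by simp
    have "1 \<le> k" using v1 assms(2) by simp
    then show ?thesis using v1 n by simp
  next
    assume r: "v mod 24 = 7"
    then have v1: "v = 24*k + 7" using vk by simp
    then have "v - 1 = 6 * (4*k+1)" by simp
    then have n: "n = 4*k+1" using assms(3) by simp
    then show ?thesis using v1 n by simp
  qed
qed

theorem mainTheorem8:
  fixes v n i :: nat
  assumes "v mod 24 = 1 \<or> v mod 24 = 7"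
    and "v \<ge> 7"
    and "n = (v - 1) div 6"
    and "i \<le> n"
  shows "\<exists>M. is_CTS v 3 M \<and> fine_c v M 2 = n - i \<and> fine_c v M 3 = i
             \<and> fine_c v M 1 = 3 * n - 2 * (n - i) - 3 * i"
proof -
  have vn': "v = 6*n+1 \<and> (n mod 4 = 0 \<or> n mod 4 = 1) \<and> 1 \<le> n" using vn[OF assms(1,2,3)] .
  have v: "v = 6*n+1" using vn' by simp
  have nm: "n mod 4 = 0 \<or> n mod 4 = 1" "1 \<le> n" using vn' by simp_all
  obtain a g where sk: "SK n a g" using sk_exists[OF nm] by blast
  have A: "\<And>j. 1 \<le> j \<Longrightarrow> j \<le> n \<Longrightarrow> 1 \<le> a j \<and> a j + j \<le> 2*n"
    using sk unfolding SK_def by blast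
  define P1 where "P1 = (\<lambda>j. (j, a j + n)) ` {1..n}"
  define P2 where "P2 = (\<lambda>j. (a j + n, j)) ` {i+1..n}"
  define Bs where "Bs = P1 \<union> P2"
  define mu where "mu = (\<lambda>b::nat\<times>nat. if fst b \<le> i then 3 else if fst b \<le> n then 2 else (1::nat))"
  define M where "M = bigM v Bs mu"
  have fin: "finite Bs" unfolding Bs_def P1_def P2_def by simp
  have mem: "b \<in> Bs \<longleftrightarrow> (\<exists>j\<in>{1..n}. b = (j, a j + n)) \<or> (\<exists>j\<in>{i+1..n}. b = (a j + n, j))" for b
    unfolding Bs_def P1_def P2_def by blast
  have g: "\<forall>b\<in>Bs. good n b"
  proof
    fix b assume "b \<in> Bs"
    then consider j where "j\<in>{1..n}" "b = (j, a j + n)" | j where "j\<in>{i+1..n}" "b = (a j + n, j)"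
      using mem by blast
    then show "good n b"
    proof cases
      case 1
      then have "1 \<le> a j \<and> a j + j \<le> 2*n" using A[of j] by simp
      then show ?thesis using 1 unfolding good_def by simp
    next
      case 2
      then have "1 \<le> a j \<and> a j + j \<le> 2*n" using A[of j] by simp
      then show ?thesis using 2 unfolding good_def by simp
    qed
  qed
  have inj1: "inj_on (\<lambda>j. (j, a j + n)) S" for S by (rule inj_onI) simp
  have inj2: "inj_on (\<lambda>j. (a j + n, j)) S" for S by (rule inj_onI) simp
  have fP1: "fst b \<le> n" if "b \<in> P1" for b using that unfolding P1_def by auto
  have fP2: "n < fst b" if bP: "b \<in> P2" for b
  proof -
    obtain j where "j \<in> {i+1..n}" "b = (a j + n, j)" using bP unfolding P2_def by blast
    then show ?thesis using A[of j] by simp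
  qed
  have disj: "P1 \<inter> P2 = {}" using fP1 fP2 by fastforce
  have finP: "finite P1" "finite P2" unfolding P1_def P2_def by simp_all
  have cts: "is_CTS v 3 M" unfolding M_def
  proof (rule cts_bigM[OF v fin g])
    fix x y assume xy: "x < v" "y < v" "x \<noteq> y"
    define d where "d = (y + v - x) mod v"
    define e where "e = (if d \<le> 3*n then d else v - d)"
    have d: "1 \<le> d" "d < v" unfolding d_def using dd_range[OF xy] by auto
    have e: "1 \<le> e" "e \<le> 3*n" unfolding e_def using d v by auto
    define C where "C = (\<lambda>j. e = j \<or> e = a j + n \<or> e = a j + j + n)"
    obtain j0 where j0: "1 \<le> j0" "j0 \<le> n" "C j0" and uq: "\<And>j. 1 \<le> j \<Longrightarrow> j \<le> n \<Longrightarrow> C j \<Longrightarrow> j = j0"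
      using sk_partition[OF sk e] unfolding C_def by metis
    have Cj: "C j \<longleftrightarrow> j = j0" if jn: "j \<in> {1..n}" for j
    proof
      assume "C j"
      moreover have "1 \<le> j" "j \<le> n" using jn by simp_all
      ultimately show "j = j0" by (rule uq[rotated 2])
    next
      assume "j = j0"
      then show "C j" using j0(3) by simp
    qed
    have c1: "d \<in> {j, a j + n, j + (a j + n), v - j, v - (a j + n), v - j - (a j + n)} \<longleftrightarrow> C j"
      if "j \<in> {1..n}" for j
    proof -
      have aj: "1 \<le> a j \<and> a j + j \<le> 2*n" using A[of j] that by simp
      have p: "1 \<le> j" "1 \<le> a j + n" "j + (a j + n) \<le> 3*n" using aj that by simp_all
      have "d \<in> {j, a j + n, j + (a j + n), v - j, v - (a j + n), v - j - (a j + n)} \<longleftrightarrow> e \<in> {j, a j + n, j + (a j + n)}"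
        using cond_e[OF v d p] unfolding e_def .
      also have "\<dots> \<longleftrightarrow> C j" unfolding C_def by (simp add: ac_simps)
      finally show ?thesis .
    qed
    have c2: "d \<in> {a j + n, j, a j + n + j, v - (a j + n), v - j, v - (a j + n) - j} \<longleftrightarrow> C j"
      if "j \<in> {1..n}" for j
    proof -
      have aj: "1 \<le> a j \<and> a j + j \<le> 2*n" using A[of j] that by simp
      have p: "1 \<le> a j + n" "1 \<le> j" "a j + n + j \<le> 3*n" using aj that by simp_all
      have "d \<in> {a j + n, j, a j + n + j, v - (a j + n), v - j, v - (a j + n) - j} \<longleftrightarrow> e \<in> {a j + n, j, a j + n + j}"
        using cond_e[OF v d p] unfolding e_def .
      also have "\<dots> \<longleftrightarrow> C j" unfolding C_def by (simp add: ac_simps)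
      finally show ?thesis .
    qed
    let ?f = "\<lambda>b. mu b * (if d \<in> {fst b, snd b, fst b + snd b, v - fst b, v - snd b, v - fst b - snd b} then 1 else 0)"
    have "sum ?f Bs = sum ?f P1 + sum ?f P2"
      unfolding Bs_def by (rule sum.union_disjoint[OF finP disj])
    also have "sum ?f P1 = (\<Sum>j\<in>{1..n}. if j = j0 then mu (j, a j + n) else 0)"
      unfolding P1_def sum.reindex[OF inj1] using c1 Cj by (intro sum.cong) auto
    also have "\<dots> = mu (j0, a j0 + n)" using j0 by (simp add: sum.delta)
    also have "sum ?f P2 = (\<Sum>j\<in>{i+1..n}. if j = j0 then 1 else 0)"
      unfolding P2_def sum.reindex[OF inj2]
    proof (intro sum.cong refl)
      fix j assume j: "j \<in> {i+1..n}"
      then have "mu (a j + n, j) = 1" using A[of j] unfolding mu_def by auto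
      moreover have "j \<in> {1..n}" using j by auto
      ultimately show "((\<lambda>b. mu b * (if d \<in> {fst b, snd b, fst b + snd b, v - fst b, v - snd b, v - fst b - snd b} then 1 else 0)) \<circ> (\<lambda>j. (a j + n, j))) j = (if j = j0 then 1 else 0)"
        using c2[of j] Cj[of j] by simp
    qed
    also have "\<dots> = (if j0 \<in> {i+1..n} then 1 else 0)" by (simp add: sum.delta)
    also have "mu (j0, a j0 + n) + (if j0 \<in> {i+1..n} then 1 else 0) = 3"
      using j0 unfolding mu_def by auto
    finally show "sum ?f Bs = 3" .
  qed
  have mu1: "mu (j, a j + n) = (if j \<le> i then 3 else 2)" if "j \<in> {1..n}" for j
    using that unfolding mu_def by simp
  have mu2: "mu (a j + n, j) = 1" if "j \<in> {i+1..n}" for j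
    using that A[of j] assms(4) unfolding mu_def by simp
  have f3: "{b\<in>Bs. mu b = 3} = (\<lambda>j. (j, a j + n)) ` {1..i}"
  proof (intro equalityI subsetI)
    fix b assume b: "b \<in> {b\<in>Bs. mu b = 3}"
    then consider j where "j\<in>{1..n}" "b = (j, a j + n)" | j where "j\<in>{i+1..n}" "b = (a j + n, j)"
      using mem by blast
    then show "b \<in> (\<lambda>j. (j, a j + n)) ` {1..i}"
    proof cases
      case 1 then show ?thesis using b mu1[of j] by (auto split: if_splits)
    next
      case 2 then show ?thesis using b mu2[of j] by auto
    qed
  next
    fix b assume "b \<in> (\<lambda>j. (j, a j + n)) ` {1..i}"
    then obtain j where j: "j \<in> {1..i}" "b = (j, a j + n)" by blast
    then show "b \<in> {b\<in>Bs. mu b = 3}" using mem[of b] mu1[of j] assms(4) by auto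
  qed
  have f2: "{b\<in>Bs. mu b = 2} = (\<lambda>j. (j, a j + n)) ` {i+1..n}"
  proof (intro equalityI subsetI)
    fix b assume b: "b \<in> {b\<in>Bs. mu b = 2}"
    then consider j where "j\<in>{1..n}" "b = (j, a j + n)" | j where "j\<in>{i+1..n}" "b = (a j + n, j)"
      using mem by blast
    then show "b \<in> (\<lambda>j. (j, a j + n)) ` {i+1..n}"
    proof cases
      case 1 then show ?thesis using b mu1[of j] by (auto split: if_splits)
    next
      case 2 then show ?thesis using b mu2[of j] by auto
    qed
  next
    fix b assume "b \<in> (\<lambda>j. (j, a j + n)) ` {i+1..n}"
    then obtain j where j: "j \<in> {i+1..n}" "b = (j, a j + n)" by blast
    then show "b \<in> {b\<in>Bs. mu b = 2}" using mem[of b] mu1[of j] by auto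
  qed
  have f1: "{b\<in>Bs. mu b = 1} = P2"
  proof (intro equalityI subsetI)
    fix b assume b: "b \<in> {b\<in>Bs. mu b = 1}"
    then consider j where "j\<in>{1..n}" "b = (j, a j + n)" | j where "j\<in>{i+1..n}" "b = (a j + n, j)"
      using mem by blast
    then show "b \<in> P2"
    proof cases
      case 1 then show ?thesis using b mu1[of j] by (auto split: if_splits)
    next
      case 2 then show ?thesis unfolding P2_def by auto
    qed
  next
    fix b assume b: "b \<in> P2"
    then obtain j where j: "j \<in> {i+1..n}" "b = (a j + n, j)" unfolding P2_def by blast
    then show "b \<in> {b\<in>Bs. mu b = 1}" using b mu2[of j] unfolding Bs_def by auto
  qed
  have F: "fine_c v M t = card {b\<in>Bs. mu b = t}" if "1 \<le> t" for t
    unfolding M_def by (rule fine_bigM[OF v fin g that])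
  have "fine_c v M 3 = i" using F[of 3] f3 card_image[OF inj1] by simp
  moreover have "fine_c v M 2 = n - i" using F[of 2] f2 card_image[OF inj1] by simp
  moreover have "fine_c v M 1 = n - i" using F[of 1] f1 card_image[OF inj2] unfolding P2_def by simp
  moreover have "3 * n - 2 * (n - i) - 3 * i = n - i" using assms(4) by simp
  ultimately show ?thesis using cts by metis
qed


end
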